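(* Let $K\ge 1$ and $T\ge 1$ be integers, let $\mathcal{K}=\{1,\dots,K\}$ and $\mathcal{T}=\{1,\dots,T\}$, and let prices $p_k(t)>0$ be given for all $k\in\mathcal{K}$, $t\in\mathcal{T}$. Write $S=\sum_{k\in\mathcal{K}}\sum_{t\in\mathcal{T}}p_k(t)$. Fix a user $n$ with parameters $\zeta_n>0$, budget $B_n\ge 0$ and minimum energy requirement $E_n^{\min}\ge 0$, and define $$d_{n,k}(t)=\frac{B_n+\zeta_n S}{KT\,p_k(t)}-\zeta_n,\qquad k\in\mathcal{K},\ t\in\mathcal{T}.$$ Then the demands $d_{n,k}(t)$ are feasible, i.e. they satisfy $d_{n,k}(t)\ge 0$ for all $k\in\mathcal{K}$, $t\in\mathcal{T}$, $\sum_{k\in\mathcal{K}}\sum_{t\in\mathcal{T}}p_k(t)d_{n,k}(t)\le B_n$, and $\sum_{k\in\mathcal{K}}\sum_{t\in\mathcal{T}}d_{n,k}(t)\ge E_n^{\min}$, if and only if $$B_n\ge \max\{f_{n,1},f_{n,2}\},$$ where $$f_{n,1}=\max_{k\in\mathcal{K},\,t\in\mathcal{T}}\zeta_n\bigl(KT\,p_k(t)-S\bigr),\qquad f_{n,2}=\frac{E_n^{\min}+\zeta_n KT}{\sum_{k\in\mathcal{K}}\sum_{t\in\mathcal{T}}\frac{1}{KT\,p_k(t)}}-\zeta_n S.$$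
   Context: This arises in a demand response model with $K$ utility companies announcing prices $p_k(t)$ over $T$ periods; user $n$ chooses demands $d_{n,k}(t)$ to maximize $\gamma_n\sum_{k}\sum_{t}\ln(\zeta_n+d_{n,k}(t))$ subject to the budget constraint $\sum_k\sum_t p_k(t)d_{n,k}(t)\le B_n$, the minimum energy constraint $\sum_k\sum_t d_{n,k}(t)\ge E_n^{\min}$, and nonnegativity $d_{n,k}(t)\ge 0$; the displayed $d_{n,k}(t)$ is the maximizer obtained when the minimum energy constraint is ignored. *)

theory Defs
  imports Complex_Main
begin

definition total_price :: "nat \<Rightarrow> nat \<Rightarrow> (nat \<Rightarrow> nat \<Rightarrow> real) \<Rightarrow> real" where
  "total_price K T p = (\<Sum>k\<in>{1..K}. \<Sum>t\<in>{1..T}. p k t)"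

definition demand :: "nat \<Rightarrow> nat \<Rightarrow> (nat \<Rightarrow> nat \<Rightarrow> real) \<Rightarrow> real \<Rightarrow> real \<Rightarrow> nat \<Rightarrow> nat \<Rightarrow> real" where
  "demand K T p zeta B k t =
     (B + zeta * total_price K T p) / (real K * real T * p k t) - zeta"

definition feasible :: "nat \<Rightarrow> nat \<Rightarrow> (nat \<Rightarrow> nat \<Rightarrow> real) \<Rightarrow> real \<Rightarrow> real \<Rightarrow> (nat \<Rightarrow> nat \<Rightarrow> real) \<Rightarrow> bool" where
  "feasible K T p B Emin d \<longleftrightarrow>
     (\<forall>k\<in>{1..K}. \<forall>t\<in>{1..T}. d k t \<ge> 0) \<and>
     (\<Sum>k\<in>{1..K}. \<Sum>t\<in>{1..T}. p k t * d k t) \<le> B \<and>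
     (\<Sum>k\<in>{1..K}. \<Sum>t\<in>{1..T}. d k t) \<ge> Emin"

definition f1 :: "nat \<Rightarrow> nat \<Rightarrow> (nat \<Rightarrow> nat \<Rightarrow> real) \<Rightarrow> real \<Rightarrow> real" where
  "f1 K T p zeta = Max ((\<lambda>(k, t). zeta * (real K * real T * p k t - total_price K T p)) ` ({1..K} \<times> {1..T}))"

definition f2 :: "nat \<Rightarrow> nat \<Rightarrow> (nat \<Rightarrow> nat \<Rightarrow> real) \<Rightarrow> real \<Rightarrow> real \<Rightarrow> real" where
  "f2 K T p zeta Emin =
     (Emin + zeta * real K * real T) /
       (\<Sum>k\<in>{1..K}. \<Sum>t\<in>{1..T}. 1 / (real K * real T * p k t))
     - zeta * total_price K T p"

end

theory Submission
  imports Defs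
begin

theorem theorem1:
  fixes K T :: nat and p :: "nat \<Rightarrow> nat \<Rightarrow> real" and zeta B Emin :: real
  assumes "K \<ge> 1" and "T \<ge> 1"
    and "\<And>k t. k \<in> {1..K} \<Longrightarrow> t \<in> {1..T} \<Longrightarrow> p k t > 0"
    and "zeta > 0" and "B \<ge> 0" and "Emin \<ge> 0"
  shows "feasible K T p B Emin (demand K T p zeta B)
           \<longleftrightarrow> B \<ge> max (f1 K T p zeta) (f2 K T p zeta Emin)"
proof -
  define N where "N = real K * real T"
  define S where "S = total_price K T p"
  define C where "C = B + zeta * S"
  define H where "H = (\<Sum>k\<in>{1..K}. \<Sum>t\<in>{1..T}. 1 / (N * p k t))"
  have Npos: "N > 0" using assms(1,2) by (simp add: N_def)
  have pp: "\<And>k t. k \<in> {1..K} \<Longrightarrow> t \<in> {1..T} \<Longrightarrow> p k t > 0" by fact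
  have d: "demand K T p zeta B k t = C / (N * p k t) - zeta" for k t
    by (simp add: demand_def C_def S_def N_def)
  have card: "(\<Sum>k\<in>{1..K}. \<Sum>t\<in>{1..T}. C / N) = C"
    using Npos assms(1,2) by (simp add: N_def)
  have budget: "(\<Sum>k\<in>{1..K}. \<Sum>t\<in>{1..T}. p k t * demand K T p zeta B k t) = B"
  proof -
    have "(\<Sum>k\<in>{1..K}. \<Sum>t\<in>{1..T}. p k t * demand K T p zeta B k t)
        = (\<Sum>k\<in>{1..K}. \<Sum>t\<in>{1..T}. C / N - zeta * p k t)"
      apply (rule sum.cong, simp, rule sum.cong, simp)
      subgoal for k t using pp[of k t] Npos by (simp add: d field_simps)
      done
    also have "\<dots> = C - zeta * S"
      using Npos assms(1,2) by (simp add: sum_subtractf S_def total_price_def sum_distrib_left N_def)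
    finally show ?thesis by (simp add: C_def)
  qed
  have energy: "(\<Sum>k\<in>{1..K}. \<Sum>t\<in>{1..T}. demand K T p zeta B k t) = C * H - zeta * N"
  proof -
    have "(\<Sum>k\<in>{1..K}. \<Sum>t\<in>{1..T}. demand K T p zeta B k t)
        = (\<Sum>k\<in>{1..K}. \<Sum>t\<in>{1..T}. C * (1 / (N * p k t)) - zeta)"
      by (simp add: d)
    also have "\<dots> = C * H - zeta * N"
      by (simp add: sum_subtractf H_def sum_distrib_left N_def)
    finally show ?thesis .
  qed
  have Hpos: "H > 0"
  proof -
    have "0 < (\<Sum>t\<in>{1..T}. 1 / (N * p 1 t))"
      apply (rule sum_pos) using assms(2) Npos pp[of 1] assms(1) by auto
    also have "\<dots> \<le> H" unfolding H_def
      apply (rule member_le_sum[where f="\<lambda>k. \<Sum>t\<in>{1..T}. 1 / (N * p k t)"])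
      using assms(1) apply simp
      apply (intro ballI sum_nonneg)
      subgoal for k t using Npos pp[of k t] by simp
      by simp
    finally show ?thesis .
  qed
  have nonneg: "(\<forall>k\<in>{1..K}. \<forall>t\<in>{1..T}. demand K T p zeta B k t \<ge> 0) \<longleftrightarrow> f1 K T p zeta \<le> B"
  proof -
    have e: "demand K T p zeta B k t \<ge> 0 \<longleftrightarrow> zeta * (N * p k t - S) \<le> B"
      if "k \<in> {1..K}" "t \<in> {1..T}" for k t
    proof -
      have "N * p k t > 0" using Npos pp[OF that] by simp
      then have "demand K T p zeta B k t \<ge> 0 \<longleftrightarrow> zeta \<le> C / (N * p k t)" by (simp add: d)
      also have "\<dots> \<longleftrightarrow> zeta * (N * p k t) \<le> C" using \<open>N * p k t > 0\<close> by (simp add: pos_le_divide_eq)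
      finally show ?thesis by (simp add: C_def algebra_simps)
    qed
    have f1: "f1 K T p zeta \<le> B \<longleftrightarrow> (\<forall>k\<in>{1..K}. \<forall>t\<in>{1..T}. zeta * (N * p k t - S) \<le> B)"
      unfolding f1_def N_def S_def
      using assms(1,2) by (subst Max_le_iff) auto
    show ?thesis using e f1 by auto
  qed
  have en: "(\<Sum>k\<in>{1..K}. \<Sum>t\<in>{1..T}. demand K T p zeta B k t) \<ge> Emin \<longleftrightarrow> f2 K T p zeta Emin \<le> B"
  proof -
    have "f2 K T p zeta Emin = (Emin + zeta * N) / H - zeta * S"
      by (simp add: f2_def N_def H_def S_def mult.assoc)
    then have "f2 K T p zeta Emin \<le> B \<longleftrightarrow> (Emin + zeta * N) / H \<le> C" by (simp add: C_def; linarith)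
    also have "\<dots> \<longleftrightarrow> Emin + zeta * N \<le> C * H" using Hpos by (simp add: pos_divide_le_eq)
    finally show ?thesis using energy by auto
  qed
  show ?thesis unfolding feasible_def using budget nonneg en by auto
qed

end
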